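(* Let $X$, $Y$ be real Banach spaces, $\Omega$ a measure space, $Z:=L^2(\Omega)$, and $e:Y\to Z$ a linear continuous dense embedding. Let $f:X\to\mathbb{R}$ and $g:X\to Y$ be continuously Fréchet differentiable. Let $(x^k)$ be generated by the augmented Lagrangian algorithm described in the context, where in Step 2 the iterate $x^{k+1}$ is chosen such that $L_{\rho_k}'(x^{k+1},w^k)\to 0$ in $X^*$ as $k\to\infty$ (derivative with respect to $x$). If $\bar x$ is a (strong) limit point of $(x^k)$, then $D\|g_+(\bar x)\|_Z^2=2g'(\bar x)^*g_+(\bar x)=0$, i.e. $\bar x$ is a stationary point of $x\mapsto\|g_+(x)\|_Z^2$.
   Context: The order on $Y$ is induced by $Z$ via $e$ (pointwise a.e.). For $z\in Z$, $z_+:=\max\{z,0\}$ pointwise; $g_+(x):=(e(g(x)))_+$; $\min$ in $Z$ is pointwise; $g'(x)^*$ denotes the adjoint of $e\circ g'(x):X\to Z$ with $Z\cong Z^*$. The augmented Lagrangian is $L_\rho(x,\lambda):=f(x)+\frac{\rho}{2}\|(g(x)+\lambda/\rho)_+\|_Z^2$, whose $x$-derivative is $f'(x)+g'(x)^*(\lambda+\rho g(x))_+$. Algorithm: (S.0) Choose $(x^0,\lambda^0)\in X\times Z$, $\rho_0>0$, $w^{\max}\in Z$ with $w^{\max}\ge 0$, $\gamma>1$, $\tau\in(0,1)$; $k=0$. (S.2) Choose $w^k\in Z$ with $0\le w^k\le w^{\max}$ a.e. and compute an approximate minimizer $x^{k+1}$ of $L_{\rho_k}(\cdot,w^k)$.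 (S.3) Set $\lambda^{k+1}:=(w^k+\rho_k g(x^{k+1}))_+$. If $k=0$ or $\|\min\{-g(x^{k+1}),w^k/\rho_k\}\|_Z\le\tau\|\min\{-g(x^k),w^{k-1}/\rho_{k-1}\}\|_Z$, set $\rho_{k+1}:=\rho_k$; else $\rho_{k+1}:=\gamma\rho_k$. (S.4) $k\leftarrow k+1$, go to (S.2). The algorithm is run without stopping. *)

theory Defs
  imports "HOL-Probability.Probability"
begin

text \<open>Z = L^2(Omega), represented by square-integrable real functions on the
  measure space M (elements identified up to M-a.e. equality where relevant).\<close>

definition L2 :: "'w measure \<Rightarrow> ('w \<Rightarrow> real) set" where
  "L2 M = {z. z \<in> borel_measurable M \<and> integrable M (\<lambda>\<omega>. (z \<omega>)\<^sup>2)}"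

definition L2norm :: "'w measure \<Rightarrow> ('w \<Rightarrow> real) \<Rightarrow> real" where
  "L2norm M z = sqrt (\<integral>\<omega>. (z \<omega>)\<^sup>2 \<partial>M)"

definition dense_embedding :: "'w measure \<Rightarrow> ('y::real_normed_vector \<Rightarrow> ('w \<Rightarrow> real)) \<Rightarrow> bool" where
  "dense_embedding M e \<longleftrightarrow>
     (\<forall>y. e y \<in> L2 M) \<and>
     (\<forall>a b. AE \<omega> in M. e (a + b) \<omega> = e a \<omega> + e b \<omega>) \<and>
     (\<forall>c a. AE \<omega> in M. e (c *\<^sub>R a) \<omega> = c * e a \<omega>) \<and>
     (\<exists>C. \<forall>y. L2norm M (e y) \<le> C * norm y) \<and>
     (\<forall>y. (AE \<omega> in M. e y \<omega> = 0) \<longrightarrow> y = 0) \<and>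
     (\<forall>z \<in> L2 M. \<forall>\<epsilon>>0. \<exists>y. L2norm M (\<lambda>\<omega>. e y \<omega> - z \<omega>) < \<epsilon>)"

definition gplus :: "('y \<Rightarrow> ('w \<Rightarrow> real)) \<Rightarrow> ('x \<Rightarrow> 'y) \<Rightarrow> 'x \<Rightarrow> 'w \<Rightarrow> real" where
  "gplus e g x = (\<lambda>\<omega>. max 0 (e (g x) \<omega>))"

text \<open>(g'(x)^* z)(h) = <z, e(g'(x) h)>_Z.\<close>
definition adj_apply :: "'w measure \<Rightarrow> ('y \<Rightarrow> ('w \<Rightarrow> real)) \<Rightarrow> ('x::real_normed_vector \<Rightarrow>\<^sub>L 'y::real_normed_vector)
    \<Rightarrow> ('w \<Rightarrow> real) \<Rightarrow> 'x \<Rightarrow> real" where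
  "adj_apply M e A z h = (\<integral>\<omega>. z \<omega> * e (blinfun_apply A h) \<omega> \<partial>M)"

text \<open>x-derivative of the augmented Lagrangian L_rho(x, lambda), applied to h:
  f'(x) h + (g'(x)^* (lambda + rho g(x))_+)(h).\<close>
definition AL_deriv :: "'w measure \<Rightarrow> ('y::real_normed_vector \<Rightarrow> ('w \<Rightarrow> real)) \<Rightarrow> ('x::real_normed_vector \<Rightarrow> 'x \<Rightarrow>\<^sub>L real)
    \<Rightarrow> ('x \<Rightarrow> 'y) \<Rightarrow> ('x \<Rightarrow> 'x \<Rightarrow>\<^sub>L 'y) \<Rightarrow> real \<Rightarrow> 'x \<Rightarrow> ('w \<Rightarrow> real) \<Rightarrow> 'x \<Rightarrow> real" where
  "AL_deriv M e f' g g' \<rho> x lam h =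
     blinfun_apply (f' x) h + adj_apply M e (g' x) (\<lambda>\<omega>. max 0 (lam \<omega> + \<rho> * e (g x) \<omega>)) h"

definition dual_norm :: "('x::real_normed_vector \<Rightarrow> real) \<Rightarrow> real" where
  "dual_norm \<phi> = Sup {\<bar>\<phi> h\<bar> | h. norm h \<le> 1}"

end

theory Submission
  imports Defs
begin

definition sqint :: "'w measure \<Rightarrow> ('w \<Rightarrow> real) \<Rightarrow> real" where
  "sqint M z = (\<integral>\<omega>. (z \<omega>)\<^sup>2 \<partial>M)"

lemma tpt: assumes t: "(t::real) > 0" shows "2 * \<bar>a * b\<bar> \<le> t * a\<^sup>2 + b\<^sup>2 / t"
proof -
  have "0 \<le> (t * \<bar>a\<bar> - \<bar>b\<bar>)\<^sup>2" by simp
  hence "0 \<le> t*t*(\<bar>a\<bar>*\<bar>a\<bar>) - 2*t*(\<bar>a\<bar>*\<bar>b\<bar>) + \<bar>b\<bar>*\<bar>b\<bar>" by (simp add: power2_eq_square algebra_simps)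
  hence "2*t*\<bar>a*b\<bar> \<le> t*t*(a*a) + b*b" by (simp add: abs_mult)
  hence "2*\<bar>a*b\<bar> \<le> (t*t*(a*a) + b*b)/t" using t by (simp add: field_simps)
  also have "\<dots> = t * a\<^sup>2 + b\<^sup>2 / t" using t by (simp add: power2_eq_square field_simps)
  finally show ?thesis .
qed

lemma L2_meas: "z \<in> L2 M \<Longrightarrow> z \<in> borel_measurable M"
  and L2_int: "z \<in> L2 M \<Longrightarrow> integrable M (\<lambda>\<omega>. (z \<omega>)\<^sup>2)"
  by (auto simp: L2_def)

lemma sqint_nonneg: "sqint M z \<ge> 0"
  unfolding sqint_def by simp

lemma L2norm_sq: "(L2norm M z)\<^sup>2 = sqint M z"
  unfolding L2norm_def sqint_def by simp

lemma L2_prod_int: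
  assumes "a \<in> L2 M" "b \<in> L2 M"
  shows "integrable M (\<lambda>\<omega>. a \<omega> * b \<omega>)"
proof (rule Bochner_Integration.integrable_bound[where f="\<lambda>\<omega>. (a \<omega>)\<^sup>2 + (b \<omega>)\<^sup>2"])
  show "integrable M (\<lambda>\<omega>. (a \<omega>)\<^sup>2 + (b \<omega>)\<^sup>2)" using assms by (auto dest: L2_int)
  show "(\<lambda>\<omega>. a \<omega> * b \<omega>) \<in> borel_measurable M" using assms by (intro borel_measurable_times L2_meas)
  show "AE x in M. norm (a x * b x) \<le> norm ((a x)\<^sup>2 + (b x)\<^sup>2)"
    using tpt[of 1] by (auto intro!: always_eventually) (smt (verit) zero_le_power2)
qed

lemma L2_bound:
  assumes "a \<in> L2 M" "z \<in> borel_measurable M" "AE \<omega> in M. \<bar>z \<omega>\<bar> \<le> \<bar>a \<omega>\<bar>"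
  shows "z \<in> L2 M"
  unfolding L2_def
proof (safe)
  show "z \<in> borel_measurable M" by fact
  show "integrable M (\<lambda>\<omega>. (z \<omega>)\<^sup>2)"
  proof (rule Bochner_Integration.integrable_bound[where f="\<lambda>\<omega>. (a \<omega>)\<^sup>2"])
    show "integrable M (\<lambda>\<omega>. (a \<omega>)\<^sup>2)" using assms by (auto dest: L2_int)
    show "(\<lambda>\<omega>. (z \<omega>)\<^sup>2) \<in> borel_measurable M" using assms by auto
    show "AE x in M. norm ((z x)\<^sup>2) \<le> norm ((a x)\<^sup>2)" using assms(3)
      by eventually_elim (simp add: abs_le_square_iff)
  qed
qed

lemma L2_add: assumes "a \<in> L2 M" "b \<in> L2 M" shows "(\<lambda>\<omega>. a \<omega> + b \<omega>) \<in> L2 M"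
  unfolding L2_def
proof (safe)
  show "(\<lambda>\<omega>. a \<omega> + b \<omega>) \<in> borel_measurable M" using assms by (intro borel_measurable_add L2_meas)
  have "integrable M (\<lambda>\<omega>. (a \<omega>)\<^sup>2 + 2 * (a \<omega> * b \<omega>) + (b \<omega>)\<^sup>2)"
    using L2_int[OF assms(1)] L2_int[OF assms(2)] L2_prod_int[OF assms] by (intro Bochner_Integration.integrable_add integrable_mult_right)
  then show "integrable M (\<lambda>\<omega>. (a \<omega> + b \<omega>)\<^sup>2)" by (simp add: power2_sum algebra_simps)
qed

lemma L2_scale: assumes "a \<in> L2 M" shows "(\<lambda>\<omega>. c * a \<omega>) \<in> L2 M"
  using assms unfolding L2_def by (auto simp: power_mult_distrib)

lemma L2_uminus: assumes "a \<in> L2 M" shows "(\<lambda>\<omega>. - a \<omega>) \<in> L2 M"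
  using L2_scale[OF assms, of "-1"] by simp

lemma L2_diff: assumes "a \<in> L2 M" "b \<in> L2 M" shows "(\<lambda>\<omega>. a \<omega> - b \<omega>) \<in> L2 M"
  using L2_add[OF assms(1) L2_uminus[OF assms(2)]] by simp

lemma L2_max0: assumes "a \<in> L2 M" shows "(\<lambda>\<omega>. max 0 (a \<omega>)) \<in> L2 M"
  by (rule L2_bound[OF assms]) (use assms in \<open>auto dest: L2_meas\<close>)

lemma L2_min: assumes "a \<in> L2 M" "b \<in> L2 M" shows "(\<lambda>\<omega>. min (a \<omega>) (b \<omega>)) \<in> L2 M"
proof (rule L2_bound[where a="\<lambda>\<omega>. \<bar>a \<omega>\<bar> + \<bar>b \<omega>\<bar>"])
  have "(\<lambda>\<omega>. \<bar>a \<omega>\<bar>) \<in> L2 M" "(\<lambda>\<omega>. \<bar>b \<omega>\<bar>) \<in> L2 M"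
    using assms by (auto simp: L2_def dest: L2_meas)
  then show "(\<lambda>\<omega>. \<bar>a \<omega>\<bar> + \<bar>b \<omega>\<bar>) \<in> L2 M" by (rule L2_add)
  show "(\<lambda>\<omega>. min (a \<omega>) (b \<omega>)) \<in> borel_measurable M" using assms by (intro borel_measurable_min L2_meas)
qed auto

lemma sqint_zero_AE:
  assumes "a \<in> L2 M" "sqint M a = 0" shows "AE \<omega> in M. a \<omega> = 0"
proof -
  have "AE \<omega> in M. (a \<omega>)\<^sup>2 = 0"
    using assms integral_nonneg_eq_0_iff_AE[of M "\<lambda>\<omega>. (a \<omega>)\<^sup>2"] by (auto simp: sqint_def dest: L2_int)
  then show ?thesis by auto
qed

lemma real_cs_aux:
  fixes I A B :: real
  assumes "A \<ge> 0" "B \<ge> 0" "\<And>t. t > 0 \<Longrightarrow> 2 * \<bar>I\<bar> \<le> t * A\<^sup>2 + B\<^sup>2 / t"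
    and "A = 0 \<Longrightarrow> I = 0" "B = 0 \<Longrightarrow> I = 0"
  shows "\<bar>I\<bar> \<le> A * B"
proof (cases "A = 0 \<or> B = 0")
  case True then show ?thesis using assms by auto
next
  case False
  then have "A > 0" "B > 0" using assms by auto
  have "2 * \<bar>I\<bar> \<le> (B / A) * A\<^sup>2 + B\<^sup>2 / (B / A)" using assms(3)[of "B/A"] \<open>A>0\<close> \<open>B>0\<close> by simp
  also have "\<dots> = 2 * (A * B)" using \<open>A>0\<close> \<open>B>0\<close> by (simp add: power2_eq_square field_simps)
  finally show ?thesis by simp
qed

lemma L2_cs:
  assumes a: "a \<in> L2 M" and b: "b \<in> L2 M"
  shows "\<bar>\<integral>\<omega>. a \<omega> * b \<omega> \<partial>M\<bar> \<le> sqrt (sqint M a) * sqrt (sqint M b)"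
proof (rule real_cs_aux)
  show "0 \<le> sqrt (sqint M a)" "0 \<le> sqrt (sqint M b)" by (auto simp: sqint_nonneg)
  fix t :: real assume t: "t > 0"
  have ia: "integrable M (\<lambda>\<omega>. (a \<omega>)\<^sup>2)" "integrable M (\<lambda>\<omega>. (b \<omega>)\<^sup>2)" using a b by (auto dest: L2_int)
  have ip: "integrable M (\<lambda>\<omega>. a \<omega> * b \<omega>)" by (rule L2_prod_int[OF a b])
  have "2 * \<bar>\<integral>\<omega>. a \<omega> * b \<omega> \<partial>M\<bar> \<le> 2 * (\<integral>\<omega>. \<bar>a \<omega> * b \<omega>\<bar> \<partial>M)"
    using integral_abs_bound[of M "\<lambda>\<omega>. a \<omega> * b \<omega>"] by simp
  also have "\<dots> = (\<integral>\<omega>. 2 * \<bar>a \<omega> * b \<omega>\<bar> \<partial>M)" by simp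
  also have "\<dots> \<le> (\<integral>\<omega>. t * (a \<omega>)\<^sup>2 + (b \<omega>)\<^sup>2 / t \<partial>M)"
  proof (rule integral_mono)
    show "integrable M (\<lambda>\<omega>. 2 * \<bar>a \<omega> * b \<omega>\<bar>)" using ip by auto
    show "integrable M (\<lambda>\<omega>. t * (a \<omega>)\<^sup>2 + (b \<omega>)\<^sup>2 / t)" using ia by auto
    fix \<omega> show "2 * \<bar>a \<omega> * b \<omega>\<bar> \<le> t * (a \<omega>)\<^sup>2 + (b \<omega>)\<^sup>2 / t" using tpt[OF t] by simp
  qed
  also have "\<dots> = t * (sqrt (sqint M a))\<^sup>2 + (sqrt (sqint M b))\<^sup>2 / t"
    using ia by (simp add: sqint_nonneg sqint_def)
  finally show "2 * \<bar>\<integral>\<omega>. a \<omega> * b \<omega> \<partial>M\<bar> \<le> t * (sqrt (sqint M a))\<^sup>2 + (sqrt (sqint M b))\<^sup>2 / t" .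
next
  assume "sqrt (sqint M a) = 0"
  then have "AE \<omega> in M. a \<omega> = 0" using sqint_zero_AE[OF a] by simp
  then have "AE \<omega> in M. a \<omega> * b \<omega> = 0" by auto
  then show "(\<integral>\<omega>. a \<omega> * b \<omega> \<partial>M) = 0" by (rule integral_eq_zero_AE)
next
  assume "sqrt (sqint M b) = 0"
  then have "AE \<omega> in M. b \<omega> = 0" using sqint_zero_AE[OF b] by simp
  then have "AE \<omega> in M. a \<omega> * b \<omega> = 0" by auto
  then show "(\<integral>\<omega>. a \<omega> * b \<omega> \<partial>M) = 0" by (rule integral_eq_zero_AE)
qed



lemma sqint_cong:
  assumes "a \<in> borel_measurable M" "b \<in> borel_measurable M" "AE \<omega> in M. a \<omega> = b \<omega>"
  shows "sqint M a = sqint M b"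
  unfolding sqint_def using assms(3) by (intro integral_cong_AE) (use assms in auto)

lemma pos_sq_ineq:
  fixes s t :: real
  shows "\<bar>(max 0 (s+t))\<^sup>2 - (max 0 s)\<^sup>2 - 2 * max 0 s * t\<bar> \<le> t\<^sup>2"
proof (cases "s \<ge> 0")
  case True
  show ?thesis
  proof (cases "s + t \<ge> 0")
    case True then show ?thesis using \<open>s\<ge>0\<close> by (simp add: power2_eq_square algebra_simps)
  next
    case False
    then have "\<bar>s+t\<bar> \<le> \<bar>t\<bar>" using \<open>s\<ge>0\<close> by auto
    then have "(s+t)\<^sup>2 \<le> t\<^sup>2" by (simp add: abs_le_square_iff)
    moreover have "(max 0 (s+t))\<^sup>2 - (max 0 s)\<^sup>2 - 2 * max 0 s * t = t\<^sup>2 - (s+t)\<^sup>2"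
      using False \<open>s\<ge>0\<close> by (simp add: power2_eq_square algebra_simps)
    ultimately show ?thesis by simp
  qed
next
  case False
  show ?thesis
  proof (cases "s + t \<ge> 0")
    case True
    then have "\<bar>s+t\<bar> \<le> \<bar>t\<bar>" using False by auto
    then have "(s+t)\<^sup>2 \<le> t\<^sup>2" by (simp add: abs_le_square_iff)
    then show ?thesis using True False by simp
  next
    case F2: False
    then show ?thesis using False by simp
  qed
qed

locale emb =
  fixes M :: "'w measure" and e :: "'y::banach \<Rightarrow> 'w \<Rightarrow> real"
  assumes emb: "dense_embedding M e"
begin

lemmas embD = emb[unfolded dense_embedding_def]
lemma e_L2: "e y \<in> L2 M" using embD by (elim conjE allE)
lemma e_meas: "e y \<in> borel_measurable M" using e_L2 by (rule L2_meas)
lemma e_add: "AE \<omega> in M. e (a + b) \<omega> = e a \<omega> + e b \<omega>" using embD by (elim conjE allE)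
lemma e_scale: "AE \<omega> in M. e (c *\<^sub>R a) \<omega> = c * e a \<omega>" using embD by (elim conjE allE)
lemma e_diff: "AE \<omega> in M. e (a - b) \<omega> = e a \<omega> - e b \<omega>"
  using e_add[of b "a - b"] by eventually_elim simp

definition Ce where "Ce = max 0 (SOME C. \<forall>y. L2norm M (e y) \<le> C * norm y)"

lemma Ce: "0 \<le> Ce" "L2norm M (e y) \<le> Ce * norm y"
proof -
  have "\<exists>C. \<forall>y. L2norm M (e y) \<le> C * norm y" using embD by (elim conjE)
  then have "\<forall>y. L2norm M (e y) \<le> (SOME C. \<forall>y. L2norm M (e y) \<le> C * norm y) * norm y" by (rule someI_ex)
  then have "L2norm M (e y) \<le> (SOME C. \<forall>y. L2norm M (e y) \<le> C * norm y) * norm y" by (rule spec)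
  also have "\<dots> \<le> Ce * norm y" unfolding Ce_def by (intro mult_right_mono) auto
  finally show "L2norm M (e y) \<le> Ce * norm y" .
  show "0 \<le> Ce" unfolding Ce_def by simp
qed

lemma e_sqrt: "sqrt (sqint M (e y)) \<le> Ce * norm y"
  using Ce(2)[of y] unfolding L2norm_def sqint_def .

lemma e_sq: "sqint M (e y) \<le> Ce\<^sup>2 * (norm y)\<^sup>2"
proof -
  have "sqint M (e y) = (L2norm M (e y))\<^sup>2" by (simp add: L2norm_sq)
  also have "\<dots> \<le> (Ce * norm y)\<^sup>2" using Ce(2)[of y] by (intro power_mono) (auto simp: L2norm_def)
  finally show ?thesis by (simp add: power_mult_distrib)
qed

lemma adj_bound:
  assumes z: "z \<in> L2 M"
  shows "\<bar>adj_apply M e A z h\<bar> \<le> sqrt (sqint M z) * Ce * norm (blinfun_apply A h)"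
proof -
  have "\<bar>adj_apply M e A z h\<bar> \<le> sqrt (sqint M z) * sqrt (sqint M (e (blinfun_apply A h)))"
    unfolding adj_apply_def by (rule L2_cs[OF z e_L2])
  also have "\<dots> \<le> sqrt (sqint M z) * (Ce * norm (blinfun_apply A h))"
    by (intro mult_left_mono e_sqrt) (auto simp: sqint_nonneg)
  finally show ?thesis by (simp add: mult.assoc)
qed

lemma adj_bound2:
  assumes z: "z \<in> L2 M"
  shows "\<bar>adj_apply M e A z h\<bar> \<le> sqrt (sqint M z) * Ce * norm A * norm h"
proof -
  have "\<bar>adj_apply M e A z h\<bar> \<le> sqrt (sqint M z) * Ce * norm (blinfun_apply A h)" by (rule adj_bound[OF z])
  also have "\<dots> \<le> sqrt (sqint M z) * Ce * (norm A * norm h)"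
    by (intro mult_left_mono norm_blinfun) (auto simp: Ce sqint_nonneg)
  finally show ?thesis by (simp add: mult.assoc)
qed

lemma adj_add:
  assumes z: "z \<in> L2 M"
  shows "adj_apply M e A z (a + b) = adj_apply M e A z a + adj_apply M e A z b"
proof -
  have m: "\<And>y. (\<lambda>\<omega>. z \<omega> * e y \<omega>) \<in> borel_measurable M" by (intro borel_measurable_times L2_meas[OF z] e_meas)
  have "adj_apply M e A z (a + b) = (\<integral>\<omega>. z \<omega> * e (blinfun_apply A a + blinfun_apply A b) \<omega> \<partial>M)"
    unfolding adj_apply_def by (simp add: blinfun.add_right)
  also have "\<dots> = (\<integral>\<omega>. z \<omega> * e (blinfun_apply A a) \<omega> + z \<omega> * e (blinfun_apply A b) \<omega> \<partial>M)"
    by (intro integral_cong_AE borel_measurable_add m)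
       (use e_add[of "blinfun_apply A a" "blinfun_apply A b"] in \<open>auto simp: algebra_simps\<close>)
  also have "\<dots> = adj_apply M e A z a + adj_apply M e A z b"
    unfolding adj_apply_def by (intro Bochner_Integration.integral_add L2_prod_int z e_L2)
  finally show ?thesis .
qed

lemma adj_scale:
  assumes z: "z \<in> L2 M"
  shows "adj_apply M e A z (c *\<^sub>R a) = c * adj_apply M e A z a"
proof -
  have m: "\<And>y. (\<lambda>\<omega>. z \<omega> * e y \<omega>) \<in> borel_measurable M" by (intro borel_measurable_times L2_meas[OF z] e_meas)
  have "adj_apply M e A z (c *\<^sub>R a) = (\<integral>\<omega>. z \<omega> * e (c *\<^sub>R blinfun_apply A a) \<omega> \<partial>M)"
    unfolding adj_apply_def by (simp add: blinfun.scaleR_right)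
  also have "\<dots> = (\<integral>\<omega>. c * (z \<omega> * e (blinfun_apply A a) \<omega>) \<partial>M)"
    by (intro integral_cong_AE borel_measurable_times borel_measurable_const m)
       (use e_scale[of c "blinfun_apply A a"] in \<open>auto simp: algebra_simps\<close>)
  also have "\<dots> = c * adj_apply M e A z a"
    unfolding adj_apply_def by simp
  finally show ?thesis .
qed

lemma adj_bl:
  assumes z: "z \<in> L2 M"
  shows "bounded_linear (adj_apply M e A z)"
proof (rule bounded_linear_intro[where K="sqrt (sqint M z) * Ce * norm A"])
  show "adj_apply M e A z (x + y) = adj_apply M e A z x + adj_apply M e A z y" for x y by (rule adj_add[OF z])
  show "adj_apply M e A z (r *\<^sub>R x) = r *\<^sub>R adj_apply M e A z x" for r x using adj_scale[OF z] by simp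
  show "norm (adj_apply M e A z x) \<le> norm x * (sqrt (sqint M z) * Ce * norm A)" for x
    using adj_bound2[OF z, of A x] by (simp add: mult_ac)
qed

end


context emb begin

lemma gplus_L2: "gplus e g u \<in> L2 M" unfolding gplus_def by (rule L2_max0[OF e_L2])

lemma key_bound:
  fixes g :: "'x::real_normed_vector \<Rightarrow> 'y" and G :: "'x \<Rightarrow>\<^sub>L 'y"
  shows "\<bar>sqint M (gplus e g (u+h)) - sqint M (gplus e g u) - 2 * adj_apply M e G (gplus e g u) h\<bar>
     \<le> Ce\<^sup>2 * (norm (g (u+h) - g u))\<^sup>2
        + 2 * (sqrt (sqint M (gplus e g u)) * Ce * norm (g (u + h) - g u - blinfun_apply G h))"
proof -
  define sp where "sp = gplus e g u"
  have sp: "sp \<in> L2 M" unfolding sp_def by (rule gplus_L2)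
  define s where "s = e (g u)"
  define t where "t \<omega> = e (g (u+h)) \<omega> - e (g u) \<omega>" for \<omega>
  define r where "r = g (u + h) - g u - blinfun_apply G h"
  have sL: "s \<in> L2 M" unfolding s_def by (rule e_L2)
  have tL: "t \<in> L2 M" unfolding t_def by (intro L2_diff e_L2)
  have sp_eq: "sp = (\<lambda>\<omega>. max 0 (s \<omega>))" unfolding sp_def gplus_def s_def ..
  have gp2: "gplus e g (u+h) = (\<lambda>\<omega>. max 0 (s \<omega> + t \<omega>))" unfolding gplus_def s_def t_def by simp
  have gp2L: "(\<lambda>\<omega>. max 0 (s \<omega> + t \<omega>)) \<in> L2 M" using gplus_L2[of g "u+h"] gp2 by simp
  define F where "F \<omega> = (max 0 (s \<omega> + t \<omega>))\<^sup>2 - (sp \<omega>)\<^sup>2 - 2 * (sp \<omega> * t \<omega>)" for \<omega>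
  define H where "H \<omega> = sp \<omega> * t \<omega> - sp \<omega> * e (blinfun_apply G h) \<omega>" for \<omega>
  have i1: "integrable M (\<lambda>\<omega>. (max 0 (s \<omega> + t \<omega>))\<^sup>2)" by (rule L2_int[OF gp2L])
  have i2: "integrable M (\<lambda>\<omega>. (sp \<omega>)\<^sup>2)" by (rule L2_int[OF sp])
  have i3: "integrable M (\<lambda>\<omega>. sp \<omega> * t \<omega>)" by (rule L2_prod_int[OF sp tL])
  have i4: "integrable M (\<lambda>\<omega>. sp \<omega> * e (blinfun_apply G h) \<omega>)" by (rule L2_prod_int[OF sp e_L2])
  have iF: "integrable M F" unfolding F_def using i1 i2 i3 by auto
  have iH: "integrable M H" unfolding H_def using i3 i4 by auto
  have eqF: "integral\<^sup>L M F = sqint M (gplus e g (u+h)) - sqint M sp - 2 * (\<integral>\<omega>. sp \<omega> * t \<omega> \<partial>M)"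
    unfolding F_def sqint_def gp2 using i1 i2 i3 by simp
  have eqH: "integral\<^sup>L M H = (\<integral>\<omega>. sp \<omega> * t \<omega> \<partial>M) - adj_apply M e G sp h"
    unfolding H_def adj_apply_def using i3 i4 by simp
  have split: "sqint M (gplus e g (u+h)) - sqint M sp - 2 * adj_apply M e G sp h = integral\<^sup>L M F + 2 * integral\<^sup>L M H"
    using eqF eqH by simp
  have bF: "\<bar>integral\<^sup>L M F\<bar> \<le> Ce\<^sup>2 * (norm (g (u+h) - g u))\<^sup>2"
  proof -
    have "\<bar>integral\<^sup>L M F\<bar> \<le> (\<integral>\<omega>. \<bar>F \<omega>\<bar> \<partial>M)" by (rule integral_abs_bound)
    also have "\<dots> \<le> (\<integral>\<omega>. (t \<omega>)\<^sup>2 \<partial>M)"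
    proof (rule integral_mono)
      show "integrable M (\<lambda>\<omega>. \<bar>F \<omega>\<bar>)" using iF by auto
      show "integrable M (\<lambda>\<omega>. (t \<omega>)\<^sup>2)" by (rule L2_int[OF tL])
      show "\<bar>F \<omega>\<bar> \<le> (t \<omega>)\<^sup>2" for \<omega>
        unfolding F_def sp_eq using pos_sq_ineq[of "s \<omega>" "t \<omega>"] by (simp add: mult.assoc)
    qed
    also have "\<dots> = sqint M (e (g (u+h) - g u))"
      unfolding sqint_def[symmetric] t_def
      by (rule sqint_cong) (use e_diff[of "g (u+h)" "g u"] L2_meas[OF tL[unfolded t_def]] e_meas in \<open>auto\<close>)
    also have "\<dots> \<le> Ce\<^sup>2 * (norm (g (u+h) - g u))\<^sup>2" by (rule e_sq)
    finally show ?thesis .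
  qed
  have eH: "integral\<^sup>L M H = (\<integral>\<omega>. sp \<omega> * e r \<omega> \<partial>M)"
  proof (rule integral_cong_AE)
    show "H \<in> borel_measurable M" using iH by auto
    show "(\<lambda>\<omega>. sp \<omega> * e r \<omega>) \<in> borel_measurable M" by (intro borel_measurable_times L2_meas[OF sp] e_meas)
    show "AE \<omega> in M. H \<omega> = sp \<omega> * e r \<omega>"
      using e_diff[of "g (u + h) - g u" "blinfun_apply G h"] e_diff[of "g (u+h)" "g u"]
      by eventually_elim (simp only: H_def t_def r_def, simp add: right_diff_distrib)
  qed
  have bH: "\<bar>integral\<^sup>L M H\<bar> \<le> sqrt (sqint M sp) * Ce * norm r"
  proof -
    have "\<bar>integral\<^sup>L M H\<bar> \<le> sqrt (sqint M sp) * sqrt (sqint M (e r))"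
      unfolding eH by (rule L2_cs[OF sp e_L2])
    also have "\<dots> \<le> sqrt (sqint M sp) * (Ce * norm r)" by (intro mult_left_mono e_sqrt) (auto simp: sqint_nonneg)
    finally show ?thesis by (simp add: mult.assoc)
  qed
  show ?thesis
    using split bF bH unfolding sp_def[symmetric] r_def[symmetric] by linarith
qed

lemma gplus_deriv:
  fixes g :: "'x::real_normed_vector \<Rightarrow> 'y" and G :: "'x \<Rightarrow>\<^sub>L 'y"
  assumes gd: "(g has_derivative blinfun_apply G) (at u)"
  shows "((\<lambda>u. (L2norm M (gplus e g u))\<^sup>2) has_derivative
            (\<lambda>h. 2 * adj_apply M e G (gplus e g u) h)) (at u)"
proof -
  define sp where "sp = gplus e g u"
  have sp: "sp \<in> L2 M" unfolding sp_def by (rule gplus_L2)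
  define S where "S = sqrt (sqint M sp)"
  define K where "K = norm G"
  define rem where "rem h = g (u + h) - g u - blinfun_apply G h" for h
  define R where "R h = norm (rem h) / norm h" for h
  have R0: "(R \<longlongrightarrow> 0) (at 0)"
    using gd unfolding has_derivative_at R_def rem_def by auto
  have S0: "S \<ge> 0" "Ce \<ge> 0" "K \<ge> 0" using Ce unfolding S_def K_def by (auto simp: sqint_nonneg)
  have bl: "bounded_linear (\<lambda>h. 2 * adj_apply M e G sp h)"
    by (rule bounded_linear_compose[OF bounded_linear_mult_right adj_bl[OF sp]])
  have fun_eq: "(\<lambda>u. (L2norm M (gplus e g u))\<^sup>2) = (\<lambda>u. sqint M (gplus e g u))"
    by (simp add: L2norm_sq)
  define B where "B h = Ce\<^sup>2 * (R h + K)\<^sup>2 * norm h + 2 * (S * Ce * R h)" for h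
  have B0: "(B \<longlongrightarrow> 0) (at 0)"
  proof -
    have "(B \<longlongrightarrow> Ce\<^sup>2 * (0 + K)\<^sup>2 * norm (0::'x) + 2 * (S * Ce * 0)) (at 0)"
      unfolding B_def by (intro tendsto_intros R0)
    then show ?thesis by simp
  qed
  have ev: "\<forall>\<^sub>F h in at 0. norm (norm (sqint M (gplus e g (u + h)) - sqint M (gplus e g u) - 2 * adj_apply M e G sp h) / norm h) \<le> B h"
    unfolding eventually_at_filter
  proof (intro always_eventually allI impI)
    fix h :: 'x assume "h \<noteq> 0" "h \<in> UNIV"
    then have n: "norm h > 0" by simp
    define a where "a = norm (g (u+h) - g u)"
    have a0: "a \<ge> 0" unfolding a_def by simp
    have "g (u+h) - g u = rem h + blinfun_apply G h" unfolding rem_def by simp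
    then have "a \<le> norm (rem h) + norm (blinfun_apply G h)" unfolding a_def by (metis norm_triangle_ineq)
    also have "\<dots> \<le> norm (rem h) + K * norm h" unfolding K_def using norm_blinfun[of G h] by simp
    also have "\<dots> = (R h + K) * norm h" unfolding R_def using n by (simp add: field_simps)
    finally have aK: "a \<le> (R h + K) * norm h" .
    have kb: "\<bar>sqint M (gplus e g (u+h)) - sqint M sp - 2 * adj_apply M e G sp h\<bar> \<le> Ce\<^sup>2 * a\<^sup>2 + 2 * (S * Ce * norm (rem h))"
      using key_bound[of g u h G] unfolding sp_def[symmetric] S_def[symmetric] a_def rem_def .
    have "a\<^sup>2 \<le> ((R h + K) * norm h)\<^sup>2" using aK a0 by (intro power_mono) auto
    then have "Ce\<^sup>2 * a\<^sup>2 \<le> Ce\<^sup>2 * ((R h + K) * norm h)\<^sup>2" by (intro mult_left_mono) auto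
    with kb have "\<bar>sqint M (gplus e g (u+h)) - sqint M sp - 2 * adj_apply M e G sp h\<bar> \<le> Ce\<^sup>2 * ((R h + K) * norm h)\<^sup>2 + 2 * (S * Ce * (R h * norm h))"
      unfolding R_def using n by simp
    also have "\<dots> = B h * norm h" unfolding B_def by (simp add: power2_eq_square algebra_simps)
    finally have "\<bar>sqint M (gplus e g (u+h)) - sqint M sp - 2 * adj_apply M e G sp h\<bar> / norm h \<le> B h"
      using n by (simp add: divide_le_eq)
    then show "norm (norm (sqint M (gplus e g (u + h)) - sqint M (gplus e g u) - 2 * adj_apply M e G sp h) / norm h) \<le> B h"
      unfolding sp_def by simp
  qed
  have "((\<lambda>h. norm (sqint M (gplus e g (u + h)) - sqint M (gplus e g u) - 2 * adj_apply M e G sp h) / norm h) \<longlongrightarrow> 0) (at 0)"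
    by (rule Lim_null_comparison[OF ev B0])
  then show ?thesis unfolding fun_eq has_derivative_at sp_def using bl unfolding sp_def by simp
qed

end


lemma L2_div: "a \<in> L2 M \<Longrightarrow> (\<lambda>\<omega>. a \<omega> / c) \<in> L2 M"
  using L2_scale[of a M "1/c"] by simp

lemma max_scale: "(r::real) > 0 \<Longrightarrow> max 0 (l + r * E) = r * max 0 (l / r + E)"
proof -
  assume r: "r > 0"
  have "l + r * E = r * (l / r + E)" using r by (simp add: field_simps)
  moreover have "max 0 (r * y) = r * max 0 y" for y using r by (auto simp: max_def zero_le_mult_iff mult_le_0_iff)
  ultimately show ?thesis by simp
qed

lemma dual_le:
  assumes "\<And>h. \<bar>\<phi> h\<bar> \<le> K * norm h" "norm h \<le> 1"
  shows "\<bar>\<phi> h\<bar> \<le> dual_norm \<phi>"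
  unfolding dual_norm_def
proof (rule cSup_upper)
  show "\<bar>\<phi> h\<bar> \<in> {\<bar>\<phi> h\<bar> |h. norm h \<le> 1}" using assms(2) by blast
  show "bdd_above {\<bar>\<phi> h\<bar> |h. norm h \<le> 1}"
  proof (rule bdd_aboveI[where M="\<bar>K\<bar>"])
    fix y assume "y \<in> {\<bar>\<phi> h\<bar> |h. norm h \<le> 1}"
    then obtain h' where h': "y = \<bar>\<phi> h'\<bar>" "norm h' \<le> 1" by blast
    have "\<bar>\<phi> h'\<bar> \<le> K * norm h'" by (rule assms(1))
    also have "\<dots> \<le> \<bar>K\<bar> * norm h'" by (intro mult_right_mono) auto
    also have "\<dots> \<le> \<bar>K\<bar>" using h'(2) by (intro mult_left_le) auto
    finally show "y \<le> \<bar>K\<bar>" using h' by simp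
  qed
qed

context emb begin

lemma adj_diff_z:
  assumes "z1 \<in> L2 M" "z2 \<in> L2 M"
  shows "adj_apply M e A (\<lambda>\<omega>. z1 \<omega> - z2 \<omega>) h = adj_apply M e A z1 h - adj_apply M e A z2 h"
  unfolding adj_apply_def using L2_prod_int[OF assms(1) e_L2] L2_prod_int[OF assms(2) e_L2]
  by (simp add: left_diff_distrib)

lemma adj_diff_A:
  assumes z: "z \<in> L2 M"
  shows "adj_apply M e A z h - adj_apply M e B z h = adj_apply M e (A - B) z h"
proof -
  have "adj_apply M e A z h - adj_apply M e B z h = (\<integral>\<omega>. z \<omega> * e (blinfun_apply A h) \<omega> - z \<omega> * e (blinfun_apply B h) \<omega> \<partial>M)"
    unfolding adj_apply_def using L2_prod_int[OF z e_L2] L2_prod_int[OF z e_L2] by simp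
  also have "\<dots> = adj_apply M e (A - B) z h"
    unfolding adj_apply_def
  proof (rule integral_cong_AE)
    show "(\<lambda>\<omega>. z \<omega> * e (blinfun_apply A h) \<omega> - z \<omega> * e (blinfun_apply B h) \<omega>) \<in> borel_measurable M"
      by (intro borel_measurable_diff borel_measurable_times L2_meas[OF z] e_meas)
    show "(\<lambda>\<omega>. z \<omega> * e (blinfun_apply (A - B) h) \<omega>) \<in> borel_measurable M"
      by (intro borel_measurable_times L2_meas[OF z] e_meas)
    show "AE \<omega> in M. z \<omega> * e (blinfun_apply A h) \<omega> - z \<omega> * e (blinfun_apply B h) \<omega> = z \<omega> * e (blinfun_apply (A - B) h) \<omega>"
      using e_diff[of "blinfun_apply A h" "blinfun_apply B h"]
      by eventually_elim (simp add: blinfun.diff_left right_diff_distrib)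
  qed
  finally show ?thesis .
qed

lemma adj_scale_z: "adj_apply M e A (\<lambda>\<omega>. c * z \<omega>) h = c * adj_apply M e A z h"
  unfolding adj_apply_def by (simp add: mult.assoc)

lemma AL_bound:
  fixes f' :: "'x::real_normed_vector \<Rightarrow> 'x \<Rightarrow>\<^sub>L real"
  assumes lam: "lam \<in> L2 M"
  shows "\<bar>AL_deriv M e f' g g' \<rho> x lam h\<bar> \<le>
    (norm (f' x) + sqrt (sqint M (\<lambda>\<omega>. max 0 (lam \<omega> + \<rho> * e (g x) \<omega>))) * Ce * norm (g' x)) * norm h"
proof -
  have z: "(\<lambda>\<omega>. max 0 (lam \<omega> + \<rho> * e (g x) \<omega>)) \<in> L2 M"
    by (intro L2_max0 L2_add lam L2_scale e_L2)
  have "\<bar>AL_deriv M e f' g g' \<rho> x lam h\<bar> \<le> \<bar>blinfun_apply (f' x) h\<bar> + \<bar>adj_apply M e (g' x) (\<lambda>\<omega>. max 0 (lam \<omega> + \<rho> * e (g x) \<omega>)) h\<bar>"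
    unfolding AL_deriv_def by (rule abs_triangle_ineq)
  also have "\<dots> \<le> norm (f' x) * norm h + sqrt (sqint M (\<lambda>\<omega>. max 0 (lam \<omega> + \<rho> * e (g x) \<omega>))) * Ce * norm (g' x) * norm h"
    using norm_blinfun[of "f' x" h] adj_bound2[OF z, of "g' x" h] by (intro add_mono) auto
  finally show ?thesis by (simp add: algebra_simps)
qed

lemma AL_dual_le:
  fixes f' :: "'x::real_normed_vector \<Rightarrow> 'x \<Rightarrow>\<^sub>L real"
  assumes lam: "lam \<in> L2 M" and h: "norm h \<le> 1"
  shows "\<bar>AL_deriv M e f' g g' \<rho> x lam h\<bar> \<le> dual_norm (AL_deriv M e f' g g' \<rho> x lam)"
  by (rule dual_le[OF AL_bound[OF lam] h])

lemma AL_div: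
  fixes f' :: "'x::real_normed_vector \<Rightarrow> 'x \<Rightarrow>\<^sub>L real"
  assumes r: "\<rho> > 0"
  shows "AL_deriv M e f' g g' \<rho> x lam h / \<rho> =
     blinfun_apply (f' x) h / \<rho> + adj_apply M e (g' x) (\<lambda>\<omega>. max 0 (lam \<omega> / \<rho> + e (g x) \<omega>)) h"
proof -
  have "(\<lambda>\<omega>. max 0 (lam \<omega> + \<rho> * e (g x) \<omega>)) = (\<lambda>\<omega>. \<rho> * max 0 (lam \<omega> / \<rho> + e (g x) \<omega>))"
    using max_scale[OF r] by simp
  then show ?thesis unfolding AL_deriv_def using r by (simp add: adj_scale_z add_divide_distrib)
qed

end

theorem theorem6p2:
  fixes M :: "'w measure"
    and e :: "'y::banach \<Rightarrow> ('w \<Rightarrow> real)"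
    and f :: "'x::banach \<Rightarrow> real" and f' :: "'x \<Rightarrow> 'x \<Rightarrow>\<^sub>L real"
    and g :: "'x \<Rightarrow> 'y" and g' :: "'x \<Rightarrow> 'x \<Rightarrow>\<^sub>L 'y"
    and x :: "nat \<Rightarrow> 'x" and lam w :: "nat \<Rightarrow> 'w \<Rightarrow> real" and \<rho> :: "nat \<Rightarrow> real"
    and wmax :: "'w \<Rightarrow> real" and \<gamma> \<tau> :: real and xbar :: 'x
  assumes emb: "dense_embedding M e"
    and f_deriv: "\<And>u. (f has_derivative blinfun_apply (f' u)) (at u)"
    and f'_cont: "continuous_on UNIV f'"
    and g_deriv: "\<And>u. (g has_derivative blinfun_apply (g' u)) (at u)"
    and g'_cont: "continuous_on UNIV g'"
    and lam0: "lam 0 \<in> L2 M"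
    and rho0: "\<rho> 0 > 0"
    and wmax: "wmax \<in> L2 M" "AE \<omega> in M. 0 \<le> wmax \<omega>"
    and gamma: "\<gamma> > 1"
    and tau: "0 < \<tau>" "\<tau> < 1"
    and w_L2: "\<And>k. w k \<in> L2 M"
    and w_bnd: "\<And>k. AE \<omega> in M. 0 \<le> w k \<omega> \<and> w k \<omega> \<le> wmax \<omega>"
    and approx_min: "(\<lambda>k. dual_norm (AL_deriv M e f' g g' (\<rho> k) (x (Suc k)) (w k)))
                        \<longlonglongrightarrow> 0"
    and lam_upd: "\<And>k. lam (Suc k) = (\<lambda>\<omega>. max 0 (w k \<omega> + \<rho> k * e (g (x (Suc k))) \<omega>))"
    and rho_upd: "\<And>k. \<rho> (Suc k) =
        (if k = 0 \<or>
            L2norm M (\<lambda>\<omega>. min (- e (g (x (Suc k))) \<omega>) (w k \<omega> / \<rho> k))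
              \<le> \<tau> * L2norm M (\<lambda>\<omega>. min (- e (g (x k)) \<omega>) (w (k - 1) \<omega> / \<rho> (k - 1)))
         then \<rho> k else \<gamma> * \<rho> k)"
    and limpt: "\<exists>r. strict_mono r \<and> (x \<circ> r) \<longlonglongrightarrow> xbar"
  shows "((\<lambda>u. (L2norm M (gplus e g u))\<^sup>2) has_derivative
            (\<lambda>h. 2 * adj_apply M e (g' xbar) (gplus e g xbar) h)) (at xbar)
         \<and> (\<forall>h. 2 * adj_apply M e (g' xbar) (gplus e g xbar) h = 0)"
proof -
  interpret emb M e using emb by unfold_locales
  have part1: "((\<lambda>u. (L2norm M (gplus e g u))\<^sup>2) has_derivative
            (\<lambda>h. 2 * adj_apply M e (g' xbar) (gplus e g xbar) h)) (at xbar)"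
    by (rule gplus_deriv[OF g_deriv])
  define z where "z = gplus e g xbar"
  have zL: "z \<in> L2 M" unfolding z_def by (rule gplus_L2)
  have rpos: "\<rho> k > 0" for k
  proof (induction k)
    case 0 then show ?case using rho0 by simp
  next
    case (Suc k) then show ?case using gamma by (simp add: rho_upd)
  qed
  have rcases: "\<rho> (Suc k) = \<rho> k \<or> \<rho> (Suc k) = \<gamma> * \<rho> k" for k by (simp add: rho_upd)
  have rmono: "\<rho> k \<le> \<rho> (Suc k)" for k
    using rcases[of k] rpos[of k] gamma by auto
  have incr: "incseq \<rho>" by (rule incseq_SucI) (rule rmono)
  obtain r where r: "strict_mono r" and xr: "(x \<circ> r) \<longlonglongrightarrow> xbar" using limpt by blast
  have isc: "isCont (\<lambda>u. (L2norm M (gplus e g u))\<^sup>2) xbar"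
    using has_derivative_continuous[OF part1] by simp
  have zero_h: "adj_apply M e (g' xbar) z h = 0" if h: "norm h \<le> 1" for h
  proof (cases "\<exists>K. \<forall>k\<ge>K. \<rho> (Suc k) = \<rho> k")
    case True
    then obtain K where K: "\<And>k. k \<ge> K \<Longrightarrow> \<rho> (Suc k) = \<rho> k" by blast
    define K1 where "K1 = Suc K"
    define a where "a k = L2norm M (\<lambda>\<omega>. min (- e (g (x k)) \<omega>) (w (k - 1) \<omega> / \<rho> (k - 1)))" for k
    have a_nonneg: "a k \<ge> 0" for k unfolding a_def L2norm_def by simp
    have step: "a (Suc k) \<le> \<tau> * a k" if k: "k \<ge> K1" for k
    proof -
      have "k \<noteq> 0" "k \<ge> K" using k unfolding K1_def by auto
      have "\<rho> (Suc k) = \<rho> k" using K \<open>k \<ge> K\<close> by blast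
      moreover have "\<gamma> * \<rho> k \<noteq> \<rho> k" using gamma rpos[of k] by simp
      ultimately have "L2norm M (\<lambda>\<omega>. min (- e (g (x (Suc k))) \<omega>) (w k \<omega> / \<rho> k))
              \<le> \<tau> * L2norm M (\<lambda>\<omega>. min (- e (g (x k)) \<omega>) (w (k - 1) \<omega> / \<rho> (k - 1)))"
        using rho_upd[of k] \<open>k \<noteq> 0\<close> by (auto split: if_splits)
      then show ?thesis unfolding a_def by simp
    qed
    have geo: "a (K1 + n) \<le> \<tau> ^ n * a K1" for n
    proof (induction n)
      case 0 then show ?case by simp
    next
      case (Suc n)
      have "a (K1 + Suc n) = a (Suc (K1 + n))" by simp
      also have "\<dots> \<le> \<tau> * a (K1 + n)" by (rule step) simp
      also have "\<dots> \<le> \<tau> * (\<tau> ^ n * a K1)" using Suc tau by (intro mult_left_mono) auto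
      finally show ?case by simp
    qed
    have a0: "a \<longlonglongrightarrow> 0"
    proof (rule Lim_null_comparison)
      show "\<forall>\<^sub>F k in sequentially. norm (a k) \<le> \<tau> ^ k * (a K1 / \<tau> ^ K1)"
      proof (rule eventually_sequentiallyI[of K1])
        fix k assume k: "K1 \<le> k"
        then obtain n where n: "k = K1 + n" using le_Suc_ex by blast
        have "norm (a k) = a (K1 + n)" using a_nonneg n by simp
        also have "\<dots> \<le> \<tau> ^ n * a K1" by (rule geo)
        also have "\<dots> = \<tau> ^ k * (a K1 / \<tau> ^ K1)" using tau n by (simp add: power_add)
        finally show "norm (a k) \<le> \<tau> ^ k * (a K1 / \<tau> ^ K1)" .
      qed
      have "(\<lambda>k. \<tau> ^ k * (a K1 / \<tau> ^ K1)) \<longlonglongrightarrow> 0 * (a K1 / \<tau> ^ K1)"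
        using tau by (intro tendsto_intros) auto
      then show "(\<lambda>k. \<tau> ^ k * (a K1 / \<tau> ^ K1)) \<longlonglongrightarrow> 0" by simp
    qed
    have gp_le: "L2norm M (gplus e g (x k)) \<le> a k" if k: "k \<ge> 1" for k
    proof -
      have wL: "(\<lambda>\<omega>. w (k - 1) \<omega> / \<rho> (k - 1)) \<in> L2 M" by (intro L2_div w_L2)
      have mL: "(\<lambda>\<omega>. min (- e (g (x k)) \<omega>) (w (k - 1) \<omega> / \<rho> (k - 1))) \<in> L2 M"
        by (intro L2_min L2_uminus e_L2 wL)
      have "(\<integral>\<omega>. (gplus e g (x k) \<omega>)\<^sup>2 \<partial>M) \<le> (\<integral>\<omega>. (min (- e (g (x k)) \<omega>) (w (k - 1) \<omega> / \<rho> (k - 1)))\<^sup>2 \<partial>M)"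
      proof (rule integral_mono_AE)
        show "integrable M (\<lambda>\<omega>. (gplus e g (x k) \<omega>)\<^sup>2)" by (rule L2_int[OF gplus_L2])
        show "integrable M (\<lambda>\<omega>. (min (- e (g (x k)) \<omega>) (w (k - 1) \<omega> / \<rho> (k - 1)))\<^sup>2)" by (rule L2_int[OF mL])
        show "AE \<omega> in M. (gplus e g (x k) \<omega>)\<^sup>2 \<le> (min (- e (g (x k)) \<omega>) (w (k - 1) \<omega> / \<rho> (k - 1)))\<^sup>2"
          using w_bnd[of "k - 1"]
        proof eventually_elim
          case (elim \<omega>)
          have v: "w (k - 1) \<omega> / \<rho> (k - 1) \<ge> 0" using elim rpos[of "k - 1"] by simp
          define E where "E = e (g (x k)) \<omega>"
          define v' where "v' = w (k - 1) \<omega> / \<rho> (k - 1)"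
          have "(max 0 E)\<^sup>2 \<le> (min (- E) v')\<^sup>2"
          proof (cases "E > 0")
            case True
            then have "min (- E) v' = - E" using v unfolding v'_def by simp
            then show ?thesis using True by simp
          next
            case False then show ?thesis by simp
          qed
          then show ?case unfolding gplus_def E_def v'_def by simp
        qed
      qed
      then show ?thesis unfolding L2norm_def a_def by (rule real_sqrt_le_mono)
    qed
    have phi0: "(\<lambda>k. (L2norm M (gplus e g (x k)))\<^sup>2) \<longlonglongrightarrow> 0"
    proof (rule Lim_null_comparison)
      show "\<forall>\<^sub>F k in sequentially. norm ((L2norm M (gplus e g (x k)))\<^sup>2) \<le> (a k)\<^sup>2"
      proof (rule eventually_sequentiallyI[of 1])
        fix k :: nat assume "1 \<le> k"
        then have "L2norm M (gplus e g (x k)) \<le> a k" by (rule gp_le)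
        moreover have "L2norm M (gplus e g (x k)) \<ge> 0" unfolding L2norm_def by simp
        ultimately show "norm ((L2norm M (gplus e g (x k)))\<^sup>2) \<le> (a k)\<^sup>2" by (simp add: power_mono)
      qed
      have "(\<lambda>k. (a k)\<^sup>2) \<longlonglongrightarrow> 0\<^sup>2" by (intro tendsto_intros a0)
      then show "(\<lambda>k. (a k)\<^sup>2) \<longlonglongrightarrow> 0" by simp
    qed
    have l1: "(\<lambda>j. (L2norm M (gplus e g (x (r j))))\<^sup>2) \<longlonglongrightarrow> 0"
      using LIMSEQ_subseq_LIMSEQ[OF phi0 r] by (simp add: o_def)
    have l2: "(\<lambda>j. (L2norm M (gplus e g (x (r j))))\<^sup>2) \<longlonglongrightarrow> (L2norm M (gplus e g xbar))\<^sup>2"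
      using isCont_tendsto_compose[OF isc xr] by (simp add: o_def)
    have "(L2norm M z)\<^sup>2 = 0" using LIMSEQ_unique[OF l2 l1] unfolding z_def .
    then have "sqint M z = 0" by (simp add: L2norm_sq)
    then have "AE \<omega> in M. z \<omega> = 0" by (rule sqint_zero_AE[OF zL])
    then have "AE \<omega> in M. z \<omega> * e (blinfun_apply (g' xbar) h) \<omega> = 0" by eventually_elim simp
    then show ?thesis unfolding adj_apply_def by (rule integral_eq_zero_AE)
  next
    case False
    have inf: "\<exists>k\<ge>K. \<rho> (Suc k) = \<gamma> * \<rho> k" for K
    proof -
      obtain k where "k \<ge> K" "\<rho> (Suc k) \<noteq> \<rho> k" using False by blast
      then show ?thesis using rcases[of k] by blast
    qed
    have grow: "\<exists>N. \<gamma> ^ m * \<rho> 0 \<le> \<rho> N" for m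
    proof (induction m)
      case 0 then show ?case by auto
    next
      case (Suc m)
      then obtain N where N: "\<gamma> ^ m * \<rho> 0 \<le> \<rho> N" by blast
      obtain k where k: "k \<ge> N" "\<rho> (Suc k) = \<gamma> * \<rho> k" using inf by blast
      have "\<gamma> ^ Suc m * \<rho> 0 = \<gamma> * (\<gamma> ^ m * \<rho> 0)" by simp
      also have "\<dots> \<le> \<gamma> * \<rho> N" using N gamma by (intro mult_left_mono) auto
      also have "\<dots> \<le> \<gamma> * \<rho> k" using incr k(1) gamma by (intro mult_left_mono) (auto simp: incseq_def)
      finally show ?case using k(2) by metis
    qed
    have rinf: "filterlim \<rho> at_top sequentially"
      unfolding filterlim_at_top
    proof
      fix Z :: real
      obtain m where m: "Z / \<rho> 0 < \<gamma> ^ m" using real_arch_pow[OF gamma] by blast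
      obtain N where N: "\<gamma> ^ m * \<rho> 0 \<le> \<rho> N" using grow by blast
      have "Z \<le> \<gamma> ^ m * \<rho> 0" using m rpos[of 0] by (simp add: divide_less_eq)
      then show "\<forall>\<^sub>F k in sequentially. Z \<le> \<rho> k"
        using N incr by (intro eventually_sequentiallyI[of N]) (auto simp: incseq_def intro: order_trans)
    qed
    have rinv: "(\<lambda>k. inverse (\<rho> k)) \<longlonglongrightarrow> 0" by (rule tendsto_inverse_0_at_top[OF rinf])
    define kk where "kk j = r (Suc j) - 1" for j
    have rS: "r (Suc j) \<ge> 1" for j using strict_monoD[OF r, of j "Suc j"] by simp
    have kkS: "Suc (kk j) = r (Suc j)" for j using rS[of j] unfolding kk_def by simp
    have kk_mono: "strict_mono kk" unfolding strict_mono_Suc_iff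
    proof
      fix j
      have "r (Suc j) < r (Suc (Suc j))" using strict_monoD[OF r] by simp
      then show "kk j < kk (Suc j)" using kkS[of j] kkS[of "Suc j"] by simp
    qed
    define xs where "xs j = x (Suc (kk j))" for j
    have xs: "xs \<longlonglongrightarrow> xbar"
      using LIMSEQ_Suc[OF xr] unfolding xs_def kkS by (simp add: o_def)
    define rh where "rh j = \<rho> (kk j)" for j
    have rhpos: "rh j > 0" for j unfolding rh_def by (rule rpos)
    have rhinv: "(\<lambda>j. inverse (rh j)) \<longlonglongrightarrow> 0"
      using LIMSEQ_subseq_LIMSEQ[OF rinv kk_mono] unfolding rh_def by (simp add: o_def)
    have dn: "(\<lambda>j. dual_norm (AL_deriv M e f' g g' (rh j) (xs j) (w (kk j)))) \<longlonglongrightarrow> 0"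
      using LIMSEQ_subseq_LIMSEQ[OF approx_min kk_mono] unfolding rh_def xs_def by (simp add: o_def)
    define \<phi> where "\<phi> j = AL_deriv M e f' g g' (rh j) (xs j) (w (kk j)) h" for j
    have phi0: "\<phi> \<longlonglongrightarrow> 0"
    proof (rule Lim_null_comparison[OF _ dn])
      show "\<forall>\<^sub>F j in sequentially. norm (\<phi> j) \<le> dual_norm (AL_deriv M e f' g g' (rh j) (xs j) (w (kk j)))"
        unfolding \<phi>_def using AL_dual_le[OF w_L2 h] by (intro always_eventually allI) simp
    qed
    have phir0: "(\<lambda>j. \<phi> j / rh j) \<longlonglongrightarrow> 0"
    proof -
      have "(\<lambda>j. \<phi> j * inverse (rh j)) \<longlonglongrightarrow> 0 * 0" by (intro tendsto_mult phi0 rhinv)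
      then show ?thesis by (simp add: divide_inverse)
    qed
    define zj where "zj j = (\<lambda>\<omega>. max 0 (w (kk j) \<omega> / rh j + e (g (xs j)) \<omega>))" for j
    have zjL: "zj j \<in> L2 M" for j unfolding zj_def by (intro L2_max0 L2_add L2_div w_L2 e_L2)
    have split: "\<phi> j / rh j = blinfun_apply (f' (xs j)) h / rh j + adj_apply M e (g' (xs j)) (zj j) h" for j
      unfolding \<phi>_def zj_def by (rule AL_div[OF rhpos])
    have f'c: "isCont f' xbar" using f'_cont continuous_on_eq_continuous_at[of UNIV f'] by simp
    have g'c: "isCont g' xbar" using g'_cont continuous_on_eq_continuous_at[of UNIV g'] by simp
    have gc: "isCont g xbar" using has_derivative_continuous[OF g_deriv[of xbar]] by simp
    have fpart: "(\<lambda>j. blinfun_apply (f' (xs j)) h / rh j) \<longlonglongrightarrow> 0"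
    proof -
      have "(\<lambda>j. f' (xs j)) \<longlonglongrightarrow> f' xbar" by (rule isCont_tendsto_compose[OF f'c xs])
      then have "(\<lambda>j. blinfun_apply (f' (xs j)) h) \<longlonglongrightarrow> blinfun_apply (f' xbar) h"
        by (rule blinfun.tendsto[OF _ tendsto_const])
      then have "(\<lambda>j. blinfun_apply (f' (xs j)) h * inverse (rh j)) \<longlonglongrightarrow> blinfun_apply (f' xbar) h * 0"
        by (intro tendsto_mult rhinv)
      then show ?thesis by (simp add: divide_inverse)
    qed
    have adjpart: "(\<lambda>j. adj_apply M e (g' (xs j)) (zj j) h) \<longlonglongrightarrow> 0"
    proof -
      have "(\<lambda>j. \<phi> j / rh j - blinfun_apply (f' (xs j)) h / rh j) \<longlonglongrightarrow> 0 - 0"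
        by (intro tendsto_diff phir0 fpart)
      then show ?thesis using split by simp
    qed
    have gx: "(\<lambda>j. g (xs j)) \<longlonglongrightarrow> g xbar" by (rule isCont_tendsto_compose[OF gc xs])
    have Aj: "(\<lambda>j. g' (xs j)) \<longlonglongrightarrow> g' xbar" by (rule isCont_tendsto_compose[OF g'c xs])
    define D where "D j = sqint M (\<lambda>\<omega>. zj j \<omega> - z \<omega>)" for j
    have D_nonneg: "D j \<ge> 0" for j unfolding D_def by (rule sqint_nonneg)
    have Dle: "D j \<le> 2 * sqint M wmax * (inverse (rh j))\<^sup>2 + 2 * (Ce\<^sup>2 * (norm (g (xs j) - g xbar))\<^sup>2)" for j
    proof -
      define Ej where "Ej = (\<lambda>\<omega>. e (g (xs j)) \<omega> - e (g xbar) \<omega>)"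
      have EjL: "Ej \<in> L2 M" unfolding Ej_def by (intro L2_diff e_L2)
      have "D j \<le> (\<integral>\<omega>. 2 * (inverse (rh j))\<^sup>2 * (wmax \<omega>)\<^sup>2 + 2 * (Ej \<omega>)\<^sup>2 \<partial>M)"
        unfolding D_def sqint_def
      proof (rule integral_mono_AE)
        show "integrable M (\<lambda>\<omega>. (zj j \<omega> - z \<omega>)\<^sup>2)" by (intro L2_int L2_diff zjL zL)
        show "integrable M (\<lambda>\<omega>. 2 * (inverse (rh j))\<^sup>2 * (wmax \<omega>)\<^sup>2 + 2 * (Ej \<omega>)\<^sup>2)"
          using L2_int[OF wmax(1)] L2_int[OF EjL] by auto
        show "AE \<omega> in M. (zj j \<omega> - z \<omega>)\<^sup>2 \<le> 2 * (inverse (rh j))\<^sup>2 * (wmax \<omega>)\<^sup>2 + 2 * (Ej \<omega>)\<^sup>2"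
          using w_bnd[of "kk j"]
        proof eventually_elim
          case (elim \<omega>)
          define p where "p = w (kk j) \<omega> / rh j"
          define q where "q = e (g (xs j)) \<omega>"
          define q0 where "q0 = e (g xbar) \<omega>"
          have p0: "0 \<le> p" "p \<le> inverse (rh j) * wmax \<omega>"
            using elim rhpos[of j] unfolding p_def by (auto simp: divide_inverse mult.commute intro: mult_right_mono)
          have "\<bar>max 0 (p + q) - max 0 q0\<bar> \<le> \<bar>p\<bar> + \<bar>q - q0\<bar>" by (auto simp: max_def abs_if)
          then have "\<bar>max 0 (p + q) - max 0 q0\<bar> \<le> \<bar>\<bar>p\<bar> + \<bar>q - q0\<bar>\<bar>" by simp
          then have "(max 0 (p + q) - max 0 q0)\<^sup>2 \<le> (\<bar>p\<bar> + \<bar>q - q0\<bar>)\<^sup>2"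
            by (simp only: abs_le_square_iff)
          also have "\<dots> \<le> 2 * p\<^sup>2 + 2 * (q - q0)\<^sup>2"
          proof -
            have "0 \<le> (\<bar>p\<bar> - \<bar>q - q0\<bar>)\<^sup>2" by simp
            then show ?thesis by (simp add: power2_eq_square algebra_simps)
          qed
          also have "\<dots> \<le> 2 * (inverse (rh j) * wmax \<omega>)\<^sup>2 + 2 * (q - q0)\<^sup>2"
          proof -
            have "p\<^sup>2 \<le> (inverse (rh j) * wmax \<omega>)\<^sup>2" using p0 by (intro power_mono) auto
            then show ?thesis by simp
          qed
          finally show ?case unfolding zj_def z_def gplus_def Ej_def p_def q_def q0_def
            by (simp add: power_mult_distrib)
        qed
      qed
      also have "\<dots> = 2 * (inverse (rh j))\<^sup>2 * sqint M wmax + 2 * sqint M Ej"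
        using L2_int[OF wmax(1)] L2_int[OF EjL] unfolding sqint_def by simp
      also have "sqint M Ej = sqint M (e (g (xs j) - g xbar))"
        unfolding Ej_def
        by (rule sqint_cong) (use e_diff[of "g (xs j)" "g xbar"] L2_meas[OF EjL[unfolded Ej_def]] e_meas in \<open>auto\<close>)
      also have "\<dots> \<le> Ce\<^sup>2 * (norm (g (xs j) - g xbar))\<^sup>2" by (rule e_sq)
      finally show ?thesis by (simp add: mult_ac)
    qed
    have D0: "D \<longlonglongrightarrow> 0"
    proof (rule Lim_null_comparison)
      show "\<forall>\<^sub>F j in sequentially. norm (D j) \<le> 2 * sqint M wmax * (inverse (rh j))\<^sup>2 + 2 * (Ce\<^sup>2 * (norm (g (xs j) - g xbar))\<^sup>2)"
        using Dle D_nonneg by (intro always_eventually allI) simp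
      have "(\<lambda>j. 2 * sqint M wmax * (inverse (rh j))\<^sup>2 + 2 * (Ce\<^sup>2 * (norm (g (xs j) - g xbar))\<^sup>2))
         \<longlonglongrightarrow> 2 * sqint M wmax * 0\<^sup>2 + 2 * (Ce\<^sup>2 * (norm (g xbar - g xbar))\<^sup>2)"
        by (intro tendsto_intros rhinv gx)
      then show "(\<lambda>j. 2 * sqint M wmax * (inverse (rh j))\<^sup>2 + 2 * (Ce\<^sup>2 * (norm (g (xs j) - g xbar))\<^sup>2)) \<longlonglongrightarrow> 0"
        by simp
    qed
    have sD0: "(\<lambda>j. sqrt (D j)) \<longlonglongrightarrow> 0"
      using tendsto_real_sqrt[OF D0] by simp
    define L where "L = adj_apply M e (g' xbar) z h"
    have adjlim: "(\<lambda>j. adj_apply M e (g' (xs j)) (zj j) h) \<longlonglongrightarrow> L"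
    proof (rule LIM_zero_cancel, rule Lim_null_comparison)
      define B where "B j = sqrt (D j) * Ce * norm (g' (xs j)) * norm h + sqrt (sqint M z) * Ce * norm (g' (xs j) - g' xbar) * norm h" for j
      show "\<forall>\<^sub>F j in sequentially. norm (adj_apply M e (g' (xs j)) (zj j) h - L) \<le> B j"
      proof (intro always_eventually allI)
        fix j
        have dzL: "(\<lambda>\<omega>. zj j \<omega> - z \<omega>) \<in> L2 M" by (intro L2_diff zjL zL)
        have "adj_apply M e (g' (xs j)) (zj j) h - L
           = adj_apply M e (g' (xs j)) (\<lambda>\<omega>. zj j \<omega> - z \<omega>) h + (adj_apply M e (g' (xs j)) z h - adj_apply M e (g' xbar) z h)"
          unfolding L_def adj_diff_z[OF zjL zL] by simp
        also have "\<dots> = adj_apply M e (g' (xs j)) (\<lambda>\<omega>. zj j \<omega> - z \<omega>) h + adj_apply M e (g' (xs j) - g' xbar) z h"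
          by (simp add: adj_diff_A[OF zL])
        finally have eq: "adj_apply M e (g' (xs j)) (zj j) h - L = \<dots>" .
        have "norm (adj_apply M e (g' (xs j)) (zj j) h - L)
           \<le> \<bar>adj_apply M e (g' (xs j)) (\<lambda>\<omega>. zj j \<omega> - z \<omega>) h\<bar> + \<bar>adj_apply M e (g' (xs j) - g' xbar) z h\<bar>"
          unfolding eq real_norm_def by (rule abs_triangle_ineq)
        also have "\<dots> \<le> B j"
          unfolding B_def D_def using adj_bound2[OF dzL, of "g' (xs j)" h] adj_bound2[OF zL, of "g' (xs j) - g' xbar" h]
          by (intro add_mono) auto
        finally show "norm (adj_apply M e (g' (xs j)) (zj j) h - L) \<le> B j" .
      qed
      have "B \<longlonglongrightarrow> 0 * Ce * norm (g' xbar) * norm h + sqrt (sqint M z) * Ce * norm (g' xbar - g' xbar) * norm h"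
        unfolding B_def by (intro tendsto_intros sD0 Aj)
      then show "B \<longlonglongrightarrow> 0" by simp
    qed
    have "L = 0" using LIMSEQ_unique[OF adjlim adjpart] .
    then show ?thesis unfolding L_def .
  qed
  have all_h: "2 * adj_apply M e (g' xbar) (gplus e g xbar) h = 0" for h
  proof -
    define c where "c = norm h + 1"
    have c: "c > 0" unfolding c_def by (simp add: add_nonneg_pos)
    have hh: "h = c *\<^sub>R (h /\<^sub>R c)" using c by simp
    have "norm (h /\<^sub>R c) \<le> 1" using c unfolding c_def by (simp add: field_simps)
    then have "adj_apply M e (g' xbar) z (h /\<^sub>R c) = 0" by (rule zero_h)
    then have "adj_apply M e (g' xbar) z h = 0" using adj_scale[OF zL, of "g' xbar" c "h /\<^sub>R c"] hh by simp
    then show ?thesis unfolding z_def by simp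
  qed
  show ?thesis using part1 all_h by blast
qed

end
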